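(* Let $X$ be a topological large scale space whose topology is Hausdorff. Then $X\cup \mathrm{Ends}(X)$, with the topology $\mathcal T_{end}$ described in the context, is a large scale compactification of $X$. Furthermore, $\mathrm{Ends}(X)$ is a compact, totally disconnected subspace of $X\cup\mathrm{Ends}(X)$.
   Context: A large scale space is a set $X$ with a family $\mathbb{LSS}$ of covers of $X$ (called uniformly bounded covers) such that (1) $st(\mathcal U,\mathcal V)\in\mathbb{LSS}$ whenever $\mathcal U,\mathcal V\in\mathbb{LSS}$, and (2) if $\mathcal U\in\mathbb{LSS}$ and $\mathcal V$ is a cover of $X$ each of whose elements is contained in some element of $\mathcal U$, then $\mathcal V\in\mathbb{LSS}$. Here $st(x,\mathcal U)$ is the union of all elements of $\mathcal U$ containing $x$, $st(A,\mathcal U)=\bigcup_{x\in A}st(x,\mathcal U)$, and $st(\mathcal U,\mathcal V)=\{st(A,\mathcal V):A\in\mathcal U\}$. A subset of $X$ is bounded if it is contained in an element of some uniformly bounded cover. Standing assumption: the union of two bounded subsets is bounded. A subset $A\subseteq X$ is coarsely clopen if for every uniformly bounded cover $\mathcal U$ the set $st(A,\mathcal U)\cap st(X\setminus A,\mathcal U)$ is bounded. An end of $X$ is a family $E$ of unbounded coarsely clopen subsets of $X$ that is maximal with respect to the property that all finite intersections of its members are unbounded; $\mathrm{Ends}(X)$ is the set of ends. A topological large scale space is a large scale space (with the standing assumption) equipped with a topology $\mathcal T$ such that some uniformly bounded cover consists of open sets. For a coarsely clopen $U$ put $U_{end}=\{E\in\mathrm{Ends}(X):U\in E\}$ and $\tilde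 U_{end}=U\cup U_{end}$. The topology $\mathcal T_{end}$ on $X\cup\mathrm{Ends}(X)$ is the one with basis $\mathcal T\cup\{\tilde U_{end}: U \text{ an open coarsely clopen subset of } X\}$; it extends $\mathcal T$, and $\mathrm{Ends}(X)$ carries the subspace topology. A topological space $Y$ containing $X$ as a subspace is large scale compact if for every open cover $\{U_s\}_{s\in S}$ of $Y$ there is a finite $F\subseteq S$ such that $Y\setminus\bigcup_{s\in F}U_s$ is a bounded subset of $X$; $Y$ is a large scale compactification of $X$ if it is large scale compact, Hausdorff, and $X$ is an open dense subspace of $Y$. *)

theory Defs
  imports "HOL-Analysis.Analysis"
begin

definition is_cover :: "'a set \<Rightarrow> 'a set set \<Rightarrow> bool" where
  "is_cover X \<U> \<longleftrightarrow> (\<forall>U\<in>\<U>. U \<subseteq> X) \<and> \<Union>\<U> = X"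

definition st_pt :: "'a \<Rightarrow> 'a set set \<Rightarrow> 'a set" where
  "st_pt x \<U> = \<Union>{U\<in>\<U>. x \<in> U}"

definition st_set :: "'a set \<Rightarrow> 'a set set \<Rightarrow> 'a set" where
  "st_set A \<U> = (\<Union>x\<in>A. st_pt x \<U>)"

definition st_cov :: "'a set set \<Rightarrow> 'a set set \<Rightarrow> 'a set set" where
  "st_cov \<U> \<V> = {st_set A \<V> | A. A \<in> \<U>}"

definition large_scale_space :: "'a set \<Rightarrow> 'a set set set \<Rightarrow> bool" where
  "large_scale_space X LSS \<longleftrightarrow>
     (\<forall>\<U>\<in>LSS. is_cover X \<U>) \<and>
     (\<forall>\<U>\<in>LSS. \<forall>\<V>\<in>LSS. st_cov \<U> \<V> \<in> LSS) \<and>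
     (\<forall>\<U>\<in>LSS. \<forall>\<V>. is_cover X \<V> \<and> (\<forall>V\<in>\<V>. \<exists>U\<in>\<U>. V \<subseteq> U) \<longrightarrow> \<V> \<in> LSS)"

definition ls_bounded :: "'a set \<Rightarrow> 'a set set set \<Rightarrow> 'a set \<Rightarrow> bool" where
  "ls_bounded X LSS B \<longleftrightarrow> B \<subseteq> X \<and> (B = {} \<or> (\<exists>\<U>\<in>LSS. \<exists>U\<in>\<U>. B \<subseteq> U))"

definition bounded_union_closed :: "'a set \<Rightarrow> 'a set set set \<Rightarrow> bool" where
  "bounded_union_closed X LSS \<longleftrightarrow>
     (\<forall>A B. ls_bounded X LSS A \<and> ls_bounded X LSS B \<longrightarrow> ls_bounded X LSS (A \<union> B))"

definition coarsely_clopen :: "'a set \<Rightarrow> 'a set set set \<Rightarrow> 'a set \<Rightarrow> bool" where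
  "coarsely_clopen X LSS A \<longleftrightarrow> A \<subseteq> X \<and>
     (\<forall>\<U>\<in>LSS. ls_bounded X LSS (st_set A \<U> \<inter> st_set (X - A) \<U>))"

definition end_family :: "'a set \<Rightarrow> 'a set set set \<Rightarrow> 'a set set \<Rightarrow> bool" where
  "end_family X LSS \<E> \<longleftrightarrow>
     (\<forall>A\<in>\<E>. coarsely_clopen X LSS A \<and> \<not> ls_bounded X LSS A) \<and>
     (\<forall>\<F>. \<F> \<subseteq> \<E> \<and> finite \<F> \<longrightarrow> \<not> ls_bounded X LSS (X \<inter> \<Inter>\<F>))"

definition is_end :: "'a set \<Rightarrow> 'a set set set \<Rightarrow> 'a set set \<Rightarrow> bool" where
  "is_end X LSS \<E> \<longleftrightarrow> end_family X LSS \<E> \<and>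
     (\<forall>\<E>'. \<E> \<subseteq> \<E>' \<and> end_family X LSS \<E>' \<longrightarrow> \<E>' = \<E>)"

definition Ends :: "'a set \<Rightarrow> 'a set set set \<Rightarrow> 'a set set set" where
  "Ends X LSS = {\<E>. is_end X LSS \<E>}"

definition top_large_scale_space :: "'a set \<Rightarrow> 'a set set set \<Rightarrow> 'a topology \<Rightarrow> bool" where
  "top_large_scale_space X LSS T \<longleftrightarrow> large_scale_space X LSS \<and> bounded_union_closed X LSS \<and>
     topspace T = X \<and> (\<exists>\<U>\<in>LSS. \<forall>U\<in>\<U>. openin T U)"

text \<open>The space X \<union> Ends(X) is modelled on the sum type: points of X are Inl x, ends are Inr E.\<close>
definition end_basis :: "'a set \<Rightarrow> 'a set set set \<Rightarrow> 'a topology \<Rightarrow> ('a + 'a set set) set set" where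
  "end_basis X LSS T =
     {Inl ` U | U. openin T U} \<union>
     {Inl ` U \<union> Inr ` {\<E> \<in> Ends X LSS. U \<in> \<E>} | U. openin T U \<and> coarsely_clopen X LSS U}"

definition T_end :: "'a set \<Rightarrow> 'a set set set \<Rightarrow> 'a topology \<Rightarrow> ('a + 'a set set) topology" where
  "T_end X LSS T = topology_generated_by (end_basis X LSS T)"

definition ls_compact :: "'b topology \<Rightarrow> 'a set \<Rightarrow> 'a set set set \<Rightarrow> ('a \<Rightarrow> 'b) \<Rightarrow> bool" where
  "ls_compact Y X LSS e \<longleftrightarrow>
     (\<forall>\<U>. (\<forall>U\<in>\<U>. openin Y U) \<and> topspace Y \<subseteq> \<Union>\<U> \<longrightarrow>
        (\<exists>\<F>. \<F> \<subseteq> \<U> \<and> finite \<F> \<and>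
           (\<exists>B. ls_bounded X LSS B \<and> topspace Y - \<Union>\<F> = e ` B)))"

definition ls_compactification ::
  "'b topology \<Rightarrow> 'a set \<Rightarrow> 'a set set set \<Rightarrow> 'a topology \<Rightarrow> ('a \<Rightarrow> 'b) \<Rightarrow> bool" where
  "ls_compactification Y X LSS T e \<longleftrightarrow>
     ls_compact Y X LSS e \<and> Hausdorff_space Y \<and>
     embedding_map T Y e \<and> openin Y (e ` X) \<and> Y closure_of (e ` X) = topspace Y"

definition totally_disconnected_space :: "'a topology \<Rightarrow> bool" where
  "totally_disconnected_space Y \<longleftrightarrow> (\<forall>S. connectedin Y S \<longrightarrow> (\<exists>a. S \<subseteq> {a}))"

end

theory Submission
  imports Defs
begin



locale tlss =
  fixes X :: "'a set" and LSS :: "'a set set set" and T :: "'a topology"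
  assumes tl: "top_large_scale_space X LSS T"
begin

abbreviation "bnd \<equiv> ls_bounded X LSS"
abbreviation "cc \<equiv> coarsely_clopen X LSS"

lemma lss: "large_scale_space X LSS" using tl by (simp add: top_large_scale_space_def)
lemma tsp: "topspace T = X" using tl by (simp add: top_large_scale_space_def)
lemma buc: "bounded_union_closed X LSS" using tl by (simp add: top_large_scale_space_def)

lemma cover: "\<U> \<in> LSS \<Longrightarrow> is_cover X \<U>" using lss unfolding large_scale_space_def by blast
lemma stcov: "\<U> \<in> LSS \<Longrightarrow> \<V> \<in> LSS \<Longrightarrow> st_cov \<U> \<V> \<in> LSS" using lss unfolding large_scale_space_def by blast

lemma bnd_subset: "bnd B \<Longrightarrow> C \<subseteq> B \<Longrightarrow> bnd C"
  unfolding ls_bounded_def by (metis subset_empty subset_trans)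

lemma bnd_Un: "bnd A \<Longrightarrow> bnd B \<Longrightarrow> bnd (A \<union> B)"
  using buc unfolding bounded_union_closed_def by simp

lemma bnd_empty: "bnd {}" by (simp add: ls_bounded_def)
lemma st_set_mono: "A \<subseteq> B \<Longrightarrow> st_set A \<V> \<subseteq> st_set B \<V>"
  unfolding st_set_def by blast
lemma st_set_Un: "st_set (A \<union> B) \<V> = st_set A \<V> \<union> st_set B \<V>"
  unfolding st_set_def by blast
lemma st_set_empty[simp]: "st_set {} \<V> = {}"
  unfolding st_set_def by blast
lemma st_set_sub: "\<V> \<in> LSS \<Longrightarrow> st_set A \<V> \<subseteq> X"
  using cover[of \<V>] unfolding st_set_def st_pt_def is_cover_def by blast
lemma st_set_sup: "\<V> \<in> LSS \<Longrightarrow> A \<subseteq> X \<Longrightarrow> A \<subseteq> st_set A \<V>"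
  using cover[of \<V>] unfolding st_set_def st_pt_def is_cover_def by blast

lemma bnd_st: assumes "bnd B" "\<V> \<in> LSS" shows "bnd (st_set B \<V>)"
proof (cases "B = {}")
  case True then show ?thesis by (simp add: bnd_empty)
next
  case False
  then obtain \<U> U where U: "\<U> \<in> LSS" "U \<in> \<U>" "B \<subseteq> U" using assms(1) unfolding ls_bounded_def by blast
  have "st_set U \<V> \<in> st_cov \<U> \<V>" using U unfolding st_cov_def by blast
  moreover have "st_cov \<U> \<V> \<in> LSS" using stcov U assms by blast
  ultimately show ?thesis unfolding ls_bounded_def using st_set_sub[OF assms(2)] st_set_mono[OF U(3)] by blast
qed

lemma cc_sub: "cc A \<Longrightarrow> A \<subseteq> X" by (simp add: coarsely_clopen_def)

lemma cc_compl: "cc A \<Longrightarrow> cc (X - A)"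
proof -
  assume a: "cc A"
  then have "X - (X - A) = A" using cc_sub by blast
  then show ?thesis using a unfolding coarsely_clopen_def by (simp add: Int_commute)
qed

lemma cc_Int: assumes "cc A" "cc B" shows "cc (A \<inter> B)"
  unfolding coarsely_clopen_def
proof (intro conjI ballI)
  show "A \<inter> B \<subseteq> X" using assms cc_sub by blast
  fix \<U> assume U: "\<U> \<in> LSS"
  have "X - A \<inter> B = (X - A) \<union> (X - B)" by blast
  hence "st_set (A \<inter> B) \<U> \<inter> st_set (X - A \<inter> B) \<U> \<subseteq>
     (st_set A \<U> \<inter> st_set (X - A) \<U>) \<union> (st_set B \<U> \<inter> st_set (X - B) \<U>)"
    using st_set_mono[of "A \<inter> B" A \<U>] st_set_mono[of "A \<inter> B" B \<U>] st_set_Un[of "X-A" "X-B" \<U>] by auto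
  moreover have "bnd ((st_set A \<U> \<inter> st_set (X - A) \<U>) \<union> (st_set B \<U> \<inter> st_set (X - B) \<U>))"
    using assms U unfolding coarsely_clopen_def by (blast intro: bnd_Un)
  ultimately show "bnd (st_set (A \<inter> B) \<U> \<inter> st_set (X - A \<inter> B) \<U>)" using bnd_subset by blast
qed

lemma cc_bdiff: assumes "cc A" "bnd C" "B \<subseteq> X" "B - C \<subseteq> A" "A - C \<subseteq> B" shows "cc B"
  unfolding coarsely_clopen_def
proof (intro conjI ballI)
  show "B \<subseteq> X" by fact
  fix \<U> assume U: "\<U> \<in> LSS"
  have C: "C \<subseteq> X" using assms(2) by (simp add: ls_bounded_def)
  have "st_set B \<U> \<subseteq> st_set A \<U> \<union> st_set C \<U>"
    using st_set_mono[of B "A \<union> C" \<U>] st_set_Un[of A C \<U>] assms by blast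
  moreover have "st_set (X - B) \<U> \<subseteq> st_set (X - A) \<U> \<union> st_set C \<U>"
    using st_set_mono[of "X - B" "(X - A) \<union> C" \<U>] st_set_Un[of "X - A" C \<U>] assms by blast
  ultimately have "st_set B \<U> \<inter> st_set (X - B) \<U> \<subseteq> (st_set A \<U> \<inter> st_set (X - A) \<U>) \<union> st_set C \<U>"
    by blast
  moreover have "bnd ((st_set A \<U> \<inter> st_set (X - A) \<U>) \<union> st_set C \<U>)"
    using assms U unfolding coarsely_clopen_def by (blast intro: bnd_Un bnd_st)
  ultimately show "bnd (st_set B \<U> \<inter> st_set (X - B) \<U>)" using bnd_subset by blast
qed

lemma cc_empty: "cc {}" unfolding coarsely_clopen_def by (simp add: bnd_empty)
lemma cc_X: "cc X" unfolding coarsely_clopen_def by (simp add: bnd_empty)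
lemma cc_bnd: "bnd C \<Longrightarrow> cc C"
  by (rule cc_bdiff[OF cc_empty, of C]) (auto simp: ls_bounded_def)

end


context tlss begin

lemma is_end_family: "is_end X LSS E \<Longrightarrow> end_family X LSS E" by (simp add: is_end_def)

lemma E1: "is_end X LSS E \<Longrightarrow> A \<in> E \<Longrightarrow> cc A \<and> \<not> bnd A"
  unfolding is_end_def end_family_def by blast

lemma E2: "is_end X LSS E \<Longrightarrow> finite F \<Longrightarrow> F \<subseteq> E \<Longrightarrow> \<not> bnd (X \<inter> \<Inter>F)"
  unfolding is_end_def end_family_def by blast

lemma E3: assumes e: "is_end X LSS E" and c: "cc A"
  and h: "\<And>F. finite F \<Longrightarrow> F \<subseteq> E \<Longrightarrow> \<not> bnd (X \<inter> \<Inter>F \<inter> A)"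
  shows "A \<in> E"
proof -
  have AX: "A \<subseteq> X" using c cc_sub by blast
  have "end_family X LSS (insert A E)"
    unfolding end_family_def
  proof (rule conjI; intro allI impI ballI)
    fix B assume "B \<in> insert A E"
    then show "cc B \<and> \<not> bnd B"
    proof
      assume "B = A"
      then show ?thesis using c h[of "{}"] AX by (simp add: Int_absorb1)
    next
      assume "B \<in> E" then show ?thesis using E1 e by blast
    qed
  next
    fix F assume F: "F \<subseteq> insert A E \<and> finite F"
    show "\<not> bnd (X \<inter> \<Inter>F)"
    proof (cases "A \<in> F")
      case True
      have "X \<inter> \<Inter>F = X \<inter> \<Inter>(F - {A}) \<inter> A" using True by blast
      then show ?thesis using h[of "F - {A}"] F by auto
    next
      case False
      then show ?thesis using E2[OF e, of F] F by blast
    qed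
  qed
  then have "insert A E = E" using e unfolding is_end_def by blast
  then show ?thesis by blast
qed

lemma E4: assumes e: "is_end X LSS E" and c: "cc A" shows "A \<in> E \<or> X - A \<in> E"
proof (rule ccontr)
  assume n: "\<not> (A \<in> E \<or> X - A \<in> E)"
  obtain F1 where F1: "finite F1" "F1 \<subseteq> E" "bnd (X \<inter> \<Inter>F1 \<inter> A)"
    using E3[OF e c] n by blast
  obtain F2 where F2: "finite F2" "F2 \<subseteq> E" "bnd (X \<inter> \<Inter>F2 \<inter> (X - A))"
    using E3[OF e cc_compl[OF c]] n by blast
  have "X \<inter> \<Inter>(F1 \<union> F2) \<subseteq> (X \<inter> \<Inter>F1 \<inter> A) \<union> (X \<inter> \<Inter>F2 \<inter> (X - A))" by blast
  then have "bnd (X \<inter> \<Inter>(F1 \<union> F2))" by (rule bnd_subset[OF bnd_Un[OF F1(3) F2(3)]])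
  moreover have "\<not> bnd (X \<inter> \<Inter>(F1 \<union> F2))" by (rule E2[OF e]) (use F1 F2 in auto)
  ultimately show False by contradiction
qed

lemma E5: assumes e: "is_end X LSS E" "A \<in> E" "B \<in> E" shows "\<not> bnd (A \<inter> B)"
proof -
  have "A \<subseteq> X" using E1 assms cc_sub by blast
  then have "X \<inter> \<Inter>{A, B} = A \<inter> B" by blast
  then show ?thesis using E2[OF e(1), of "{A,B}"] assms by auto
qed

lemma E6: assumes e: "is_end X LSS E" "A \<in> E" "B \<in> E" shows "A \<inter> B \<in> E"
proof -
  have c: "cc (A \<inter> B)" using cc_Int E1 assms by blast
  { assume "X - A \<inter> B \<in> E"
    then have "\<not> bnd (X \<inter> \<Inter>{A, B, X - A \<inter> B})" using E2[OF e(1), of "{A, B, X - A \<inter> B}"] assms by auto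
    moreover have "X \<inter> \<Inter>{A, B, X - A \<inter> B} = {}" by blast
    ultimately have False using bnd_empty by simp }
  then show ?thesis using E4[OF e(1) c] by blast
qed

lemma E8: assumes e: "is_end X LSS E" "A \<in> E" and c: "cc B" and s: "A - C \<subseteq> B" and b: "bnd C"
  shows "B \<in> E"
proof -
  { assume "X - B \<in> E"
    then have "\<not> bnd (A \<inter> (X - B))" using E5 assms by blast
    moreover have "A \<inter> (X - B) \<subseteq> C" using s by blast
    ultimately have False using bnd_subset[OF b] by blast }
  then show ?thesis using E4[OF e(1) c] by blast
qed

lemma E7: assumes e: "is_end X LSS E" "A \<inter> B \<in> E" "cc A" shows "A \<in> E"
  using E8[OF e(1,2) e(3), of "{}"] bnd_empty by blast

lemma E9: assumes e: "is_end X LSS E" shows "X \<in> E"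
proof (rule E3[OF e cc_X])
  fix F assume "finite F" "F \<subseteq> E"
  then have "\<not> bnd (X \<inter> \<Inter>F)" by (rule E2[OF e])
  moreover have "X \<inter> \<Inter>F \<inter> X = X \<inter> \<Inter>F" by blast
  ultimately show "\<not> bnd (X \<inter> \<Inter>F \<inter> X)" by simp
qed

lemma Zorn_end: assumes G: "end_family X LSS G" shows "\<exists>E. is_end X LSS E \<and> G \<subseteq> E"
proof -
  let ?A = "{E. end_family X LSS E \<and> G \<subseteq> E}"
  have "\<exists>M\<in>?A. \<forall>Y\<in>?A. M \<subseteq> Y \<longrightarrow> Y = M"
  proof (rule subset_Zorn_nonempty)
    show "?A \<noteq> {}" using G by blast
  next
    fix C assume C: "C \<noteq> {}" "subset.chain ?A C"
    then have CA: "C \<subseteq> ?A" by (simp add: subset.chain_def)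
    have "end_family X LSS (\<Union>C)"
      unfolding end_family_def
    proof (rule conjI; intro allI impI ballI)
      fix A assume "A \<in> \<Union>C"
      then show "cc A \<and> \<not> bnd A" using CA unfolding end_family_def by blast
    next
      fix F assume F: "F \<subseteq> \<Union>C \<and> finite F"
      then obtain B where "B \<in> C" "F \<subseteq> B" using finite_subset_Union_chain[of F C ?A] C by blast
      then show "\<not> bnd (X \<inter> \<Inter>F)" using CA F unfolding end_family_def by blast
    qed
    moreover have "G \<subseteq> \<Union>C" using C CA by blast
    ultimately show "\<Union>C \<in> ?A" by blast
  qed
  then obtain M where M: "M \<in> ?A" "\<forall>Y\<in>?A. M \<subseteq> Y \<longrightarrow> Y = M" by blast
  then have "is_end X LSS M" unfolding is_end_def by blast
  then show ?thesis using M by blast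
qed

lemma Ends_iff: "E \<in> Ends X LSS \<longleftrightarrow> is_end X LSS E" by (simp add: Ends_def)

lemma K: assumes u: "\<And>E. is_end X LSS E \<Longrightarrow> cc (u E) \<and> u E \<in> E"
  shows "\<exists>S. finite S \<and> S \<subseteq> Ends X LSS \<and> bnd (X - \<Union>(u ` S)) \<and>
      (\<forall>E'. is_end X LSS E' \<longrightarrow> (\<exists>E\<in>S. u E \<in> E'))"
proof -
  have "\<exists>S. finite S \<and> S \<subseteq> Ends X LSS \<and> bnd (X - \<Union>(u ` S))"
  proof (rule ccontr)
    assume n: "\<not> ?thesis"
    let ?G = "(\<lambda>E. X - u E) ` Ends X LSS"
    have "end_family X LSS ?G"
      unfolding end_family_def
    proof (rule conjI; intro allI impI ballI)
      fix A assume "A \<in> ?G"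
      then obtain E where E: "E \<in> Ends X LSS" "A = X - u E" by blast
      have "cc A" using E u cc_compl Ends_iff by blast
      moreover have "\<not> bnd A" using n[simplified, rule_format, of "{E}"] E by auto
      ultimately show "cc A \<and> \<not> bnd A" by blast
    next
      fix F assume F: "F \<subseteq> ?G \<and> finite F"
      then obtain S where S: "S \<subseteq> Ends X LSS" "finite S" "F = (\<lambda>E. X - u E) ` S"
        using finite_subset_image[of F "\<lambda>E. X - u E" "Ends X LSS"] by blast
      have "X \<inter> \<Inter>F = X - \<Union>(u ` S)" using S by blast
      then show "\<not> bnd (X \<inter> \<Inter>F)" using n S by auto
    qed
    then obtain E where E: "is_end X LSS E" "?G \<subseteq> E" using Zorn_end by blast
    then have "X - u E \<in> E" using Ends_iff by blast
    then have "\<not> bnd ((X - u E) \<inter> u E)" using E5 E u by blast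
    moreover have "(X - u E) \<inter> u E = {}" by blast
    ultimately show False using bnd_empty by simp
  qed
  then obtain S where S: "finite S" "S \<subseteq> Ends X LSS" "bnd (X - \<Union>(u ` S))" by blast
  have "\<exists>E\<in>S. u E \<in> E'" if e: "is_end X LSS E'" for E'
  proof (rule ccontr)
    assume "\<not> ?thesis"
    then have sub: "(\<lambda>E. X - u E) ` S \<subseteq> E'" using E4[OF e] u S(2) Ends_iff by blast
    have "X \<inter> \<Inter>((\<lambda>E. X - u E) ` S) = X - \<Union>(u ` S)" by blast
    then show False using E2[OF e _ sub] S by simp
  qed
  then show ?thesis using S by blast
qed

end


context tlss begin

definition tlU :: "'a set \<Rightarrow> ('a + 'a set set) set" where
  "tlU U = Inl ` U \<union> Inr ` {E \<in> Ends X LSS. U \<in> E}"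

abbreviation "Y \<equiv> T_end X LSS T"

lemma basis_eq: "end_basis X LSS T = {Inl ` U | U. openin T U} \<union> {tlU U | U. openin T U \<and> cc U}"
  unfolding end_basis_def tlU_def by (rule refl)

lemma Y_open: "openin Y W \<longleftrightarrow> generate_topology_on (end_basis X LSS T) W"
  unfolding T_end_def by (rule openin_topology_generated_by_iff)

lemma Y_basis1: "openin T U \<Longrightarrow> openin Y (Inl ` U)"
  unfolding T_end_def basis_eq by (rule topology_generated_by_Basis) blast

lemma Y_basis2: "openin T U \<Longrightarrow> cc U \<Longrightarrow> openin Y (tlU U)"
  unfolding T_end_def basis_eq by (rule topology_generated_by_Basis) blast

lemma openT_sub: "openin T U \<Longrightarrow> U \<subseteq> X"
  using openin_subset[of T U] tsp by simp

lemma Y_top: "topspace Y = Inl ` X \<union> Inr ` Ends X LSS"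
proof -
  have "topspace Y = \<Union>(end_basis X LSS T)" unfolding T_end_def by simp
  also have "\<dots> = Inl ` X \<union> Inr ` Ends X LSS"
  proof
    show "\<Union>(end_basis X LSS T) \<subseteq> Inl ` X \<union> Inr ` Ends X LSS"
    proof
      fix p assume "p \<in> \<Union>(end_basis X LSS T)"
      then obtain s where s: "s \<in> end_basis X LSS T" "p \<in> s" by blast
      then consider (a) U where "openin T U" "s = Inl ` U" | (b) U where "openin T U" "s = tlU U"
        unfolding basis_eq by blast
      then show "p \<in> Inl ` X \<union> Inr ` Ends X LSS"
      proof cases
        case a then show ?thesis using s(2) openT_sub by blast
      next
        case b then show ?thesis using s(2) openT_sub unfolding tlU_def by blast
      qed
    qed
  next
    have oX: "openin T X" using tsp openin_topspace by metis
    have "Inl ` X \<in> end_basis X LSS T" unfolding basis_eq using oX by blast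
    moreover have "tlU X \<in> end_basis X LSS T" unfolding basis_eq using oX cc_X by blast
    moreover have "Inr ` Ends X LSS \<subseteq> tlU X" unfolding tlU_def using E9 Ends_iff by blast
    ultimately show "Inl ` X \<union> Inr ` Ends X LSS \<subseteq> \<Union>(end_basis X LSS T)" by blast
  qed
  finally show ?thesis .
qed

lemma nbhd_gen: assumes "generate_topology_on (end_basis X LSS T) W"
  shows "(\<forall>x. Inl x \<in> W \<longrightarrow> (\<exists>U. openin T U \<and> x \<in> U \<and> Inl ` U \<subseteq> W)) \<and>
         (\<forall>E. Inr E \<in> W \<longrightarrow> E \<in> Ends X LSS \<and> (\<exists>U. openin T U \<and> cc U \<and> U \<in> E \<and> tlU U \<subseteq> W))"
  using assms
proof induction
  case Empty
  then show ?case by simp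
next
  case (Int a b)
  show ?case
  proof (intro conjI allI impI)
    fix x assume "Inl x \<in> a \<inter> b"
    then obtain U1 U2 where "openin T U1" "x \<in> U1" "Inl ` U1 \<subseteq> a" "openin T U2" "x \<in> U2" "Inl ` U2 \<subseteq> b"
      using Int.IH by blast
    then show "\<exists>U. openin T U \<and> x \<in> U \<and> Inl ` U \<subseteq> a \<inter> b"
      by (intro exI[of _ "U1 \<inter> U2"]) auto
  next
    fix E assume "Inr E \<in> a \<inter> b"
    then show "E \<in> Ends X LSS" using Int.IH by blast
  next
    fix E assume "Inr E \<in> a \<inter> b"
    then obtain U1 U2 where U: "openin T U1" "cc U1" "U1 \<in> E" "tlU U1 \<subseteq> a"
        "openin T U2" "cc U2" "U2 \<in> E" "tlU U2 \<subseteq> b" and e: "E \<in> Ends X LSS"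
      using Int.IH by blast
    have "tlU (U1 \<inter> U2) \<subseteq> tlU U1 \<inter> tlU U2"
    proof -
      have "U1 \<in> F \<and> U2 \<in> F" if "F \<in> Ends X LSS" "U1 \<inter> U2 \<in> F" for F
      proof -
        have f: "is_end X LSS F" using that Ends_iff by blast
        have "U1 \<in> F" using E7[OF f that(2) U(2)] .
        moreover have "U2 \<inter> U1 \<in> F" using that(2) by (simp add: Int_commute)
        then have "U2 \<in> F" using E7[OF f _ U(6)] by blast
        ultimately show ?thesis by blast
      qed
      then show ?thesis unfolding tlU_def by blast
    qed
    moreover have "U1 \<inter> U2 \<in> E" using E6 e U Ends_iff by blast
    ultimately show "\<exists>U. openin T U \<and> cc U \<and> U \<in> E \<and> tlU U \<subseteq> a \<inter> b"
      using U cc_Int by (intro exI[of _ "U1 \<inter> U2"]) blast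
  qed
next
  case (UN K)
  show ?case
  proof (intro conjI allI impI)
    fix x assume "Inl x \<in> \<Union>K"
    then obtain k where k: "k \<in> K" "Inl x \<in> k" by blast
    from UN.IH[OF k(1)] k(2) obtain U where "openin T U" "x \<in> U" "Inl ` U \<subseteq> k" by blast
    then show "\<exists>U. openin T U \<and> x \<in> U \<and> Inl ` U \<subseteq> \<Union>K" using k(1) by blast
  next
    fix E assume "Inr E \<in> \<Union>K"
    then obtain k where k: "k \<in> K" "Inr E \<in> k" by blast
    from UN.IH[OF k(1)] k(2) show "E \<in> Ends X LSS" by blast
  next
    fix E assume "Inr E \<in> \<Union>K"
    then obtain k where k: "k \<in> K" "Inr E \<in> k" by blast
    from UN.IH[OF k(1)] k(2) obtain U where "openin T U" "cc U" "U \<in> E" "tlU U \<subseteq> k" by blast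
    then show "\<exists>U. openin T U \<and> cc U \<and> U \<in> E \<and> tlU U \<subseteq> \<Union>K" using k(1) by blast
  qed
next
  case (Basis s)
  have "s \<in> {Inl ` U | U. openin T U} \<or> s \<in> {tlU U | U. openin T U \<and> cc U}"
    using Basis(1)[unfolded basis_eq] by (rule UnE) (rule disjI1, assumption, rule disjI2, assumption)
  then consider (a) U where "openin T U" "s = Inl ` U" | (b) U where "openin T U" "cc U" "s = tlU U"
    by blast
  then show ?case
  proof cases
    case a
    show ?thesis
    proof (intro conjI allI impI)
      fix x assume "Inl x \<in> s"
      then show "\<exists>U'. openin T U' \<and> x \<in> U' \<and> Inl ` U' \<subseteq> s"
        using a by (intro exI[of _ U]) auto
    next
      fix E assume "Inr E \<in> s" then show "E \<in> Ends X LSS" using a by auto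
    next
      fix E assume "Inr E \<in> s" then show "\<exists>U'. openin T U' \<and> cc U' \<and> U' \<in> E \<and> tlU U' \<subseteq> s"
        using a by auto
    qed
  next
    case b
    show ?thesis
    proof (intro conjI allI impI)
      fix x assume "Inl x \<in> s"
      then show "\<exists>U'. openin T U' \<and> x \<in> U' \<and> Inl ` U' \<subseteq> s"
        using b unfolding tlU_def by (intro exI[of _ U]) auto
    next
      fix E assume "Inr E \<in> s" then show "E \<in> Ends X LSS" using b unfolding tlU_def by auto
    next
      fix E assume "Inr E \<in> s"
      then have "U \<in> E" using b unfolding tlU_def by auto
      then show "\<exists>U'. openin T U' \<and> cc U' \<and> U' \<in> E \<and> tlU U' \<subseteq> s"
        using b by (intro exI[of _ U]) auto
    qed
  qed
qed

lemma nbhd: "openin Y W \<Longrightarrow> Inl x \<in> W \<Longrightarrow> \<exists>U. openin T U \<and> x \<in> U \<and> Inl ` U \<subseteq> W"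
  using nbhd_gen Y_open by blast

lemma nbhdE: "openin Y W \<Longrightarrow> Inr E \<in> W \<Longrightarrow> E \<in> Ends X LSS \<and> (\<exists>U. openin T U \<and> cc U \<and> U \<in> E \<and> tlU U \<subseteq> W)"
  using nbhd_gen Y_open by blast

lemma preimage_open: assumes "openin Y W" shows "openin T {x \<in> X. Inl x \<in> W}"
proof (subst openin_subopen, intro ballI)
  fix x assume "x \<in> {x \<in> X. Inl x \<in> W}"
  then obtain U where "openin T U" "x \<in> U" "Inl ` U \<subseteq> W" using nbhd assms by blast
  then show "\<exists>T'. openin T T' \<and> x \<in> T' \<and> T' \<subseteq> {x \<in> X. Inl x \<in> W}"
    using openT_sub by blast
qed

lemma open_cover: obtains \<U>0 where "\<U>0 \<in> LSS" "\<forall>U\<in>\<U>0. openin T U"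
  using tl unfolding top_large_scale_space_def by blast

lemma st_open: assumes "\<forall>U\<in>\<U>0. openin T U" shows "openin T (st_set A \<U>0)"
  unfolding st_set_def st_pt_def
  apply (rule openin_Union)
  apply clarify
  apply (rule openin_Union)
  using assms by auto

lemma closure_bnd: assumes "bnd D" shows "bnd (T closure_of D)"
proof (cases "D = {}")
  case True then show ?thesis by (simp add: bnd_empty)
next
  case False
  obtain \<U>0 where U0: "\<U>0 \<in> LSS" "\<forall>U\<in>\<U>0. openin T U" using open_cover by blast
  obtain \<W> W where W: "\<W> \<in> LSS" "W \<in> \<W>" "D \<subseteq> W" using assms False unfolding ls_bounded_def by blast
  have WX: "W \<subseteq> X" using cover[OF W(1)] W(2) unfolding is_cover_def by blast
  have bW: "bnd W" unfolding ls_bounded_def using W WX by blast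
  have "T closure_of D \<subseteq> st_set W \<U>0"
  proof
    fix y assume y: "y \<in> T closure_of D"
    then have yX: "y \<in> X" using closure_of_subset_topspace[of T D] tsp by blast
    then obtain V where V: "V \<in> \<U>0" "y \<in> V" using cover[OF U0(1)] unfolding is_cover_def by blast
    then have "openin T V" using U0 by blast
    then obtain z where z: "z \<in> D" "z \<in> V" using y V(2) by (auto simp: in_closure_of)
    then have "y \<in> st_pt z \<U>0" unfolding st_pt_def using V by blast
    then show "y \<in> st_set W \<U>0" unfolding st_set_def using z W by blast
  qed
  then show ?thesis using bnd_subset[OF bnd_st[OF bW U0(1)]] by blast
qed

lemma sep: assumes c: "cc A"
  shows "\<exists>U1 U2. openin T U1 \<and> openin T U2 \<and> cc U1 \<and> cc U2 \<and> U1 \<inter> U2 = {} \<and>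
     (\<forall>F. is_end X LSS F \<longrightarrow> (A \<in> F \<longrightarrow> U1 \<in> F) \<and> (X - A \<in> F \<longrightarrow> U2 \<in> F))"
proof -
  obtain \<U>0 where U0: "\<U>0 \<in> LSS" "\<forall>U\<in>\<U>0. openin T U" using open_cover by blast
  have AX: "A \<subseteq> X" using c cc_sub by blast
  define D where "D = st_set A \<U>0 \<inter> st_set (X - A) \<U>0"
  have bD: "bnd D" using c U0 unfolding D_def coarsely_clopen_def by blast
  define C where "C = T closure_of D"
  have bC: "bnd C" using closure_bnd[OF bD] C_def by simp
  have clC: "closedin T C" unfolding C_def by simp
  have DX: "D \<subseteq> X" unfolding D_def using st_set_sub[OF U0(1), of A] by blast
  have DC: "D \<subseteq> C" unfolding C_def by (rule closure_of_subset) (simp add: tsp DX)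
  have s1: "st_set A \<U>0 \<subseteq> X" "st_set (X - A) \<U>0 \<subseteq> X" using st_set_sub[OF U0(1)] by auto
  have s2: "A \<subseteq> st_set A \<U>0" "X - A \<subseteq> st_set (X - A) \<U>0" using st_set_sup[OF U0(1)] AX by auto
  have DC': "st_set A \<U>0 \<inter> st_set (X - A) \<U>0 \<subseteq> C" using DC unfolding D_def .
  have e1: "st_set A \<U>0 - C = A - C"
  proof
    show "st_set A \<U>0 - C \<subseteq> A - C"
    proof
      fix x assume x: "x \<in> st_set A \<U>0 - C"
      show "x \<in> A - C"
      proof (rule ccontr)
        assume "x \<notin> A - C"
        then have "x \<in> X - A" using x s1 by blast
        then have "x \<in> st_set A \<U>0 \<inter> st_set (X - A) \<U>0" using x s2 by blast
        then show False using x DC' by blast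
      qed
    qed
    show "A - C \<subseteq> st_set A \<U>0 - C" using s2 by blast
  qed
  have e2: "st_set (X - A) \<U>0 - C = (X - A) - C"
  proof
    show "st_set (X - A) \<U>0 - C \<subseteq> (X - A) - C"
    proof
      fix x assume x: "x \<in> st_set (X - A) \<U>0 - C"
      show "x \<in> (X - A) - C"
      proof (rule ccontr)
        assume "x \<notin> (X - A) - C"
        then have "x \<in> A" using x s1 by blast
        then have "x \<in> st_set A \<U>0 \<inter> st_set (X - A) \<U>0" using x s2 by blast
        then show False using x DC' by blast
      qed
    qed
    show "(X - A) - C \<subseteq> st_set (X - A) \<U>0 - C" using s2 by blast
  qed
  have o1: "openin T (A - C)" using openin_diff[OF st_open[OF U0(2)] clC, of A] unfolding e1 .
  have o2: "openin T ((X - A) - C)" using openin_diff[OF st_open[OF U0(2)] clC, of "X - A"] unfolding e2 .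
  have c1: "cc (A - C)" by (rule cc_bdiff[OF c bC]) (use AX in auto)
  have c2: "cc ((X - A) - C)" by (rule cc_bdiff[OF cc_compl[OF c] bC]) auto
  have "(A \<in> F \<longrightarrow> A - C \<in> F) \<and> (X - A \<in> F \<longrightarrow> (X - A) - C \<in> F)" if f: "is_end X LSS F" for F
  proof (intro conjI impI)
    assume "A \<in> F" then show "A - C \<in> F" by (rule E8[OF f _ c1 _ bC]) auto
  next
    assume "X - A \<in> F" then show "(X - A) - C \<in> F" by (rule E8[OF f _ c2 _ bC]) auto
  qed
  moreover have "(A - C) \<inter> ((X - A) - C) = {}" by blast
  ultimately show ?thesis using o1 o2 c1 c2 by (intro exI[of _ "A - C"] exI[of _ "(X - A) - C"]) simp
qed

lemma tl_disj: "U1 \<inter> U2 = {} \<Longrightarrow> tlU U1 \<inter> tlU U2 = {}"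
proof -
  assume d: "U1 \<inter> U2 = {}"
  have "\<not> (U1 \<in> F \<and> U2 \<in> F)" if "F \<in> Ends X LSS" for F
  proof
    assume "U1 \<in> F \<and> U2 \<in> F"
    then have "\<not> bnd (U1 \<inter> U2)" using E5[of F U1 U2] that unfolding Ends_iff by blast
    then show False using d bnd_empty by simp
  qed
  show ?thesis
  proof (rule equals0I)
    fix p assume p: "p \<in> tlU U1 \<inter> tlU U2"
    show False
    proof (cases p)
      case (Inl x)
      then have "x \<in> U1" "x \<in> U2" using p unfolding tlU_def by auto
      then show False using d by blast
    next
      case (Inr F)
      then have "F \<in> Ends X LSS" "U1 \<in> F" "U2 \<in> F" using p unfolding tlU_def by auto
      then show False using \<open>\<And>F. F \<in> Ends X LSS \<Longrightarrow> \<not> (U1 \<in> F \<and> U2 \<in> F)\<close> by blast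
    qed
  qed
qed

lemma sep_ends: assumes e: "is_end X LSS E" "is_end X LSS E'" "E \<noteq> E'"
  shows "\<exists>U1 U2. openin T U1 \<and> openin T U2 \<and> cc U1 \<and> cc U2 \<and> U1 \<inter> U2 = {} \<and> U1 \<in> E \<and> U2 \<in> E' \<and>
     (\<forall>F. is_end X LSS F \<longrightarrow> U1 \<in> F \<or> U2 \<in> F)"
proof -
  have "\<not> E \<subseteq> E'" using e(3) is_end_family[OF e(2)] e(1)[unfolded is_end_def] by blast
  then obtain A where A: "A \<in> E" "A \<notin> E'" by blast
  have c: "cc A" using E1[OF e(1) A(1)] by (rule conjunct1)
  have XA: "X - A \<in> E'" using E4[OF e(2) c]
  proof (rule disjE)
    assume "A \<in> E'" then show ?thesis using A(2) by contradiction
  next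
    assume "X - A \<in> E'" then show ?thesis .
  qed
  from sep[OF c] obtain U1 U2 where U': "openin T U1 \<and> openin T U2 \<and> cc U1 \<and> cc U2 \<and> U1 \<inter> U2 = {} \<and>
     (\<forall>F. is_end X LSS F \<longrightarrow> (A \<in> F \<longrightarrow> U1 \<in> F) \<and> (X - A \<in> F \<longrightarrow> U2 \<in> F))"
    by (elim exE) (erule that)
  have U6: "(A \<in> F \<longrightarrow> U1 \<in> F) \<and> (X - A \<in> F \<longrightarrow> U2 \<in> F)" if "is_end X LSS F" for F
    using U' that by blast
  have all: "\<forall>F. is_end X LSS F \<longrightarrow> U1 \<in> F \<or> U2 \<in> F"
  proof (intro allI impI)
    fix F assume f: "is_end X LSS F"
    show "U1 \<in> F \<or> U2 \<in> F" using E4[OF f c] U6[OF f] by blast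
  qed
  have "U1 \<in> E" using U6[OF e(1)] A(1) by (elim conjE) (erule mp)
  moreover have "U2 \<in> E'" using U6[OF e(2)] XA by (elim conjE) (erule mp)
  ultimately show ?thesis using U' all by (intro exI[of _ U1] exI[of _ U2] conjI) simp_all
qed

end


context tlss begin

lemma top_Inl: "Inl x \<in> topspace Y \<longleftrightarrow> x \<in> X"
  using Y_top by auto

lemma top_Inr: "Inr E \<in> topspace Y \<longleftrightarrow> is_end X LSS E"
  using Y_top Ends_iff by auto

lemma sep_pt_end: assumes x: "x \<in> X" and e: "is_end X LSS E"
  shows "\<exists>U V. openin Y U \<and> openin Y V \<and> Inl x \<in> U \<and> Inr E \<in> V \<and> disjnt U V"
proof -
  obtain \<U>0 where U0: "\<U>0 \<in> LSS" "\<forall>U\<in>\<U>0. openin T U" using open_cover by blast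
  obtain W where W: "W \<in> \<U>0" "x \<in> W" using cover[OF U0(1)] x unfolding is_cover_def by blast
  have WX: "W \<subseteq> X" using cover[OF U0(1)] W(1) unfolding is_cover_def by blast
  have bW: "bnd W" unfolding ls_bounded_def using W WX U0(1) by blast
  define C where "C = T closure_of W"
  have bC: "bnd C" unfolding C_def by (rule closure_bnd[OF bW])
  have clC: "closedin T C" unfolding C_def by simp
  have WC: "W \<subseteq> C" unfolding C_def by (rule closure_of_subset) (simp add: tsp WX)
  have oW: "openin T W" using U0(2) W(1) by blast
  have oU: "openin T (X - C)" using openin_diff[OF openin_topspace clC] tsp by simp
  have cU: "cc (X - C)" by (rule cc_bdiff[OF cc_X bC]) auto
  have UE: "X - C \<in> E" by (rule E8[OF e E9[OF e] cU _ bC]) auto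
  have "Inr E \<in> tlU (X - C)" unfolding tlU_def using UE e Ends_iff by blast
  moreover have "disjnt (Inl ` W) (tlU (X - C))" unfolding tlU_def disjnt_def using WC by auto
  ultimately show ?thesis using Y_basis1[OF oW] Y_basis2[OF oU cU] W(2)
    by (intro exI[of _ "Inl ` W"] exI[of _ "tlU (X - C)"]) auto
qed

lemma Hausdorff_Y: assumes H: "Hausdorff_space T" shows "Hausdorff_space Y"
  unfolding Hausdorff_space_def
proof (intro allI impI)
  fix p q assume pq: "p \<in> topspace Y \<and> q \<in> topspace Y \<and> p \<noteq> q"
  show "\<exists>U V. openin Y U \<and> openin Y V \<and> p \<in> U \<and> q \<in> V \<and> disjnt U V"
  proof (cases p)
    case (Inl x)
    then have x: "x \<in> X" using pq top_Inl by blast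
    show ?thesis
    proof (cases q)
      case (Inl y)
      then have y: "y \<in> X" "x \<noteq> y" using pq top_Inl \<open>p = Inl x\<close> by auto
      then obtain U V where UV: "openin T U" "openin T V" "x \<in> U" "y \<in> V" "disjnt U V"
        using H x tsp unfolding Hausdorff_space_def by metis
      have "disjnt (Inl ` U) (Inl ` V)" using UV(5) unfolding disjnt_def by auto
      then show ?thesis using Y_basis1[OF UV(1)] Y_basis1[OF UV(2)] UV(3,4) \<open>p = Inl x\<close> Inl
        by (intro exI[of _ "Inl ` U"] exI[of _ "Inl ` V"]) auto
    next
      case (Inr E)
      then have e: "is_end X LSS E" using pq top_Inr by blast
      show ?thesis using sep_pt_end[OF x e] \<open>p = Inl x\<close> Inr by blast
    qed
  next
    case (Inr E)
    then have e: "is_end X LSS E" using pq top_Inr by blast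
    show ?thesis
    proof (cases q)
      case (Inl y)
      then have y: "y \<in> X" using pq top_Inl by blast
      obtain U V where UV: "openin Y U" "openin Y V" "Inl y \<in> U" "Inr E \<in> V" "disjnt U V"
        using sep_pt_end[OF y e] by blast
      then show ?thesis using \<open>p = Inr E\<close> Inl disjnt_sym[of U V]
        by (intro exI[of _ V] exI[of _ U]) auto
    next
      case (Inr E')
      then have e': "is_end X LSS E'" "E \<noteq> E'" using pq top_Inr \<open>p = Inr E\<close> by auto
      obtain U1 U2 where U: "openin T U1 \<and> openin T U2 \<and> cc U1 \<and> cc U2 \<and> U1 \<inter> U2 = {} \<and> U1 \<in> E \<and> U2 \<in> E' \<and>
          (\<forall>F. is_end X LSS F \<longrightarrow> U1 \<in> F \<or> U2 \<in> F)"
        using sep_ends[OF e e'] by (elim exE) (erule that)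
      have o1: "openin Y (tlU U1)" using Y_basis2 U by blast
      have o2: "openin Y (tlU U2)" using Y_basis2 U by blast
      have d: "disjnt (tlU U1) (tlU U2)" using tl_disj U unfolding disjnt_def by simp
      have "Inr E \<in> tlU U1" "Inr E' \<in> tlU U2" using U e e'(1) Ends_iff unfolding tlU_def by auto
      then show ?thesis using o1 o2 d \<open>p = Inr E\<close> Inr
        by (intro exI[of _ "tlU U1"] exI[of _ "tlU U2"]) auto
    qed
  qed
qed

lemma Cov: assumes op: "\<forall>W\<in>\<W>. openin Y W" and cv: "Inr ` Ends X LSS \<subseteq> \<Union>\<W>"
  shows "\<exists>\<F>. \<F> \<subseteq> \<W> \<and> finite \<F> \<and> Inr ` Ends X LSS \<subseteq> \<Union>\<F> \<and> bnd {x \<in> X. Inl x \<notin> \<Union>\<F>}"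
proof -
  have ex: "\<exists>p. is_end X LSS E \<longrightarrow> (snd p \<in> \<W> \<and> openin T (fst p) \<and> cc (fst p) \<and> fst p \<in> E \<and> tlU (fst p) \<subseteq> snd p)" for E
  proof (cases "is_end X LSS E")
    case True
    then have "Inr E \<in> \<Union>\<W>" using cv Ends_iff by blast
    then obtain W where W: "W \<in> \<W>" "Inr E \<in> W" by blast
    then obtain U where "openin T U \<and> cc U \<and> U \<in> E \<and> tlU U \<subseteq> W" using nbhdE op by blast
    then show ?thesis using W by (intro exI[of _ "(U, W)"]) simp
  qed simp
  have "\<forall>E. \<exists>p. is_end X LSS E \<longrightarrow> (snd p \<in> \<W> \<and> openin T (fst p) \<and> cc (fst p) \<and> fst p \<in> E \<and> tlU (fst p) \<subseteq> snd p)"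
    using ex by (intro allI)
  from choice[OF this] obtain f where f0: "\<forall>E. is_end X LSS E \<longrightarrow> (snd (f E) \<in> \<W> \<and> openin T (fst (f E)) \<and> cc (fst (f E)) \<and> fst (f E) \<in> E \<and> tlU (fst (f E)) \<subseteq> snd (f E))"
    by (elim exE) (erule that)
  have f: "snd (f E) \<in> \<W> \<and> openin T (fst (f E)) \<and> cc (fst (f E)) \<and> fst (f E) \<in> E \<and> tlU (fst (f E)) \<subseteq> snd (f E)" if "is_end X LSS E" for E
    using f0 that by blast
  define u where "u E = fst (f E)" for E
  define w where "w E = snd (f E)" for E
  have uw0: "w E \<in> \<W> \<and> openin T (u E) \<and> cc (u E) \<and> u E \<in> E \<and> tlU (u E) \<subseteq> w E" if "is_end X LSS E" for E
    unfolding u_def w_def by (rule f[OF that])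
  have uw1: "w E \<in> \<W>" if "is_end X LSS E" for E using uw0[OF that] by (elim conjE) assumption
  have uw2: "openin T (u E)" if "is_end X LSS E" for E using uw0[OF that] by (elim conjE) assumption
  have uw3: "cc (u E)" if "is_end X LSS E" for E using uw0[OF that] by (elim conjE) assumption
  have uw4: "u E \<in> E" if "is_end X LSS E" for E using uw0[OF that] by (elim conjE) assumption
  have uw5: "tlU (u E) \<subseteq> w E" if "is_end X LSS E" for E using uw0[OF that] by (elim conjE) assumption
  note uw = uw1 uw2 uw3 uw4 uw5
  have ccu: "cc (u E) \<and> u E \<in> E" if "is_end X LSS E" for E using uw(3,4)[OF that] by (rule conjI)
  have "\<exists>S. finite S \<and> S \<subseteq> Ends X LSS \<and> bnd (X - \<Union>(u ` S)) \<and>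
      (\<forall>E'. is_end X LSS E' \<longrightarrow> (\<exists>E\<in>S. u E \<in> E'))" by (rule K) (erule ccu)
  then obtain S where S0: "finite S \<and> S \<subseteq> Ends X LSS \<and> bnd (X - \<Union>(u ` S)) \<and>
      (\<forall>E'. is_end X LSS E' \<longrightarrow> (\<exists>E\<in>S. u E \<in> E'))" by (elim exE) (erule that)
  have S1: "finite S" using S0 by (elim conjE) assumption
  have S2: "S \<subseteq> Ends X LSS" using S0 by (elim conjE) assumption
  have S3: "bnd (X - \<Union>(u ` S))" using S0 by (elim conjE) assumption
  have S4: "\<forall>E'. is_end X LSS E' \<longrightarrow> (\<exists>E\<in>S. u E \<in> E')" using S0 by (elim conjE) assumption
  note S = S1 S2 S3 S4
  have Sends: "is_end X LSS E" if "E \<in> S" for E using S(2) that Ends_iff by blast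
  have "w ` S \<subseteq> \<W>" using uw(1) Sends by blast
  moreover have "finite (w ` S)" using S(1) by simp
  moreover have "Inr ` Ends X LSS \<subseteq> \<Union>(w ` S)"
  proof
    fix p :: "'a + 'a set set" assume "p \<in> Inr ` Ends X LSS"
    then obtain E' where E': "p = Inr E'" "is_end X LSS E'" using Ends_iff by blast
    then obtain E where E: "E \<in> S" "u E \<in> E'" using S(4) by blast
    then have "Inr E' \<in> tlU (u E)" unfolding tlU_def using E'(2) Ends_iff by blast
    then show "p \<in> \<Union>(w ` S)" using uw(5)[OF Sends[OF E(1)]] E(1) E'(1) by blast
  qed
  moreover have "bnd {x \<in> X. Inl x \<notin> \<Union>(w ` S)}"
  proof (rule bnd_subset[OF S(3)])
    show "{x \<in> X. Inl x \<notin> \<Union>(w ` S)} \<subseteq> X - \<Union>(u ` S)"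
    proof
      fix x assume x: "x \<in> {x \<in> X. Inl x \<notin> \<Union>(w ` S)}"
      have "x \<notin> u E" if "E \<in> S" for E
      proof
        assume "x \<in> u E"
        then have "Inl x \<in> tlU (u E)" unfolding tlU_def by blast
        then have "Inl x \<in> w E" using uw(5)[OF Sends[OF that]] by blast
        then show False using x that by blast
      qed
      then show "x \<in> X - \<Union>(u ` S)" using x by blast
    qed
  qed
  ultimately show ?thesis by blast
qed

lemma Inr_sub_top: "Inr ` Ends X LSS \<subseteq> topspace Y"
  unfolding Y_top by (rule Un_upper2)

lemma Inl_sub_top: "Inl ` X \<subseteq> topspace Y"
  unfolding Y_top by (rule Un_upper1)

lemma Y_ls_compact: "ls_compact Y X LSS Inl"
  unfolding ls_compact_def
proof (intro allI impI)
  fix \<W> assume a: "(\<forall>U\<in>\<W>. openin Y U) \<and> topspace Y \<subseteq> \<Union>\<W>"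
  have c: "Inr ` Ends X LSS \<subseteq> \<Union>\<W>" using Inr_sub_top conjunct2[OF a] by (rule subset_trans)
  from Cov[OF conjunct1[OF a] c] obtain \<F> where F0: "\<F> \<subseteq> \<W> \<and> finite \<F> \<and> Inr ` Ends X LSS \<subseteq> \<Union>\<F> \<and> bnd {x \<in> X. Inl x \<notin> \<Union>\<F>}"
    by (elim exE) (erule that)
  have F1: "\<F> \<subseteq> \<W>" using F0 by (elim conjE) assumption
  have F2: "finite \<F>" using F0 by (elim conjE) assumption
  have F3: "Inr ` Ends X LSS \<subseteq> \<Union>\<F>" using F0 by (elim conjE) assumption
  have F4: "bnd {x \<in> X. Inl x \<notin> \<Union>\<F>}" using F0 by (elim conjE) assumption
  have eq: "topspace Y - \<Union>\<F> = Inl ` {x \<in> X. Inl x \<notin> \<Union>\<F>}"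
    using F3 unfolding Y_top by auto
  show "\<exists>\<F>. \<F> \<subseteq> \<W> \<and> finite \<F> \<and> (\<exists>B. bnd B \<and> topspace Y - \<Union>\<F> = Inl ` B)"
    by (intro exI[of _ \<F>] conjI exI[of _ "{x \<in> X. Inl x \<notin> \<Union>\<F>}"] F1 F2 F4 eq)
qed

lemma Y_compact_ends: "compactin Y (Inr ` Ends X LSS)"
  unfolding compactin_def
proof (intro conjI allI impI)
  show "Inr ` Ends X LSS \<subseteq> topspace Y" by (rule Inr_sub_top)
  fix \<W> assume a: "(\<forall>U\<in>\<W>. openin Y U) \<and> Inr ` Ends X LSS \<subseteq> \<Union>\<W>"
  from Cov[OF conjunct1[OF a] conjunct2[OF a]] obtain \<F> where F0: "\<F> \<subseteq> \<W> \<and> finite \<F> \<and> Inr ` Ends X LSS \<subseteq> \<Union>\<F> \<and> bnd {x \<in> X. Inl x \<notin> \<Union>\<F>}"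
    by (elim exE) (erule that)
  have F1: "\<F> \<subseteq> \<W>" using F0 by (elim conjE) assumption
  have F2: "finite \<F>" using F0 by (elim conjE) assumption
  have F3: "Inr ` Ends X LSS \<subseteq> \<Union>\<F>" using F0 by (elim conjE) assumption
  show "\<exists>\<F>. finite \<F> \<and> \<F> \<subseteq> \<W> \<and> Inr ` Ends X LSS \<subseteq> \<Union>\<F>"
    by (intro exI[of _ \<F>] conjI F1 F2 F3)
qed

lemma Y_embedding: "embedding_map T Y Inl"
proof (rule injective_open_imp_embedding_map)
  show "continuous_map T Y Inl"
    unfolding continuous_map_def
  proof (intro conjI allI impI)
    show "Inl \<in> topspace T \<rightarrow> topspace Y" using Inl_sub_top tsp by auto
    fix U assume "openin Y U"
    then show "openin T {x \<in> topspace T. Inl x \<in> U}" using preimage_open tsp by simp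
  qed
  show "open_map T Y Inl" unfolding open_map_def using Y_basis1 by simp
  show "inj_on Inl (topspace T)" by simp
qed

lemma Y_open_X: "openin Y (Inl ` X)"
  using Y_basis1[of X] openin_topspace[of T] tsp by simp

lemma Y_dense: "Y closure_of (Inl ` X) = topspace Y"
proof
  show "Y closure_of (Inl ` X) \<subseteq> topspace Y" by (rule closure_of_subset_topspace)
  show "topspace Y \<subseteq> Y closure_of (Inl ` X)"
  proof
    fix p assume p: "p \<in> topspace Y"
    show "p \<in> Y closure_of (Inl ` X)"
    proof (cases p)
      case (Inl x)
      then have "p \<in> Inl ` X" using p unfolding Y_top by auto
      then show ?thesis using closure_of_subset[OF Inl_sub_top] by (rule subsetD[rotated])
    next
      case (Inr E)
      show ?thesis unfolding in_closure_of
      proof (intro conjI allI impI)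
        show "p \<in> topspace Y" by fact
        fix W assume W: "p \<in> W \<and> openin Y W"
        have Wo: "openin Y W" using W by (rule conjunct2)
        have WE: "Inr E \<in> W" using W Inr by simp
        have nb: "E \<in> Ends X LSS \<and> (\<exists>U. openin T U \<and> cc U \<and> U \<in> E \<and> tlU U \<subseteq> W)"
          by (rule nbhdE[OF Wo WE])
        have "\<exists>U. openin T U \<and> cc U \<and> U \<in> E \<and> tlU U \<subseteq> W" using nb by (rule conjunct2)
        then obtain U where U: "openin T U \<and> cc U \<and> U \<in> E \<and> tlU U \<subseteq> W"
          by (elim exE) (erule that)
        have e: "is_end X LSS E" using nb Ends_iff by simp
        have UE: "U \<in> E" using U by (elim conjE) assumption
        have UW: "tlU U \<subseteq> W" using U by (elim conjE) assumption
        have Uo: "openin T U" using U by (elim conjE) assumption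
        have "\<not> bnd U" using E1[OF e UE] by (rule conjunct2)
        then have "U \<noteq> {}" using bnd_empty by auto
        then obtain x where x: "x \<in> U" by auto
        then have "x \<in> X" using openT_sub[OF Uo] by auto
        moreover have "Inl x \<in> W" using x UW unfolding tlU_def by auto
        ultimately show "\<exists>y. y \<in> Inl ` X \<and> y \<in> W" by auto
      qed
    qed
  qed
qed

lemma Y_tot_disc: "totally_disconnected_space (subtopology Y (Inr ` Ends X LSS))"
  unfolding totally_disconnected_space_def
proof (intro allI impI)
  fix S assume "connectedin (subtopology Y (Inr ` Ends X LSS)) S"
  then have cS: "connectedin Y S" and SE: "S \<subseteq> Inr ` Ends X LSS"
    unfolding connectedin_subtopology by auto
  show "\<exists>a. S \<subseteq> {a}"
  proof (rule ccontr)
    assume n: "\<nexists>a. S \<subseteq> {a}"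
    then obtain p where p: "p \<in> S" by auto
    have "\<not> S \<subseteq> {p}" using n by auto
    then obtain q where q: "q \<in> S" "q \<noteq> p" by auto
    obtain E where E: "p = Inr E" "is_end X LSS E" using p SE Ends_iff by auto
    obtain E' where E': "q = Inr E'" "is_end X LSS E'" using q SE Ends_iff by auto
    have ne: "E \<noteq> E'" using E(1) E'(1) q(2) by auto
    obtain U1 U2 where U: "openin T U1 \<and> openin T U2 \<and> cc U1 \<and> cc U2 \<and> U1 \<inter> U2 = {} \<and> U1 \<in> E \<and> U2 \<in> E' \<and>
          (\<forall>F. is_end X LSS F \<longrightarrow> U1 \<in> F \<or> U2 \<in> F)"
      using sep_ends[OF E(2) E'(2) ne] by (elim exE) (erule that)
    have U1o: "openin T U1" using U by (elim conjE) assumption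
    have U2o: "openin T U2" using U by (elim conjE) assumption
    have U1c: "cc U1" using U by (elim conjE) assumption
    have U2c: "cc U2" using U by (elim conjE) assumption
    have Ud: "U1 \<inter> U2 = {}" using U by (elim conjE) assumption
    have U1E: "U1 \<in> E" using U by (elim conjE) assumption
    have U2E: "U2 \<in> E'" using U by (elim conjE) assumption
    have Uall: "\<forall>F. is_end X LSS F \<longrightarrow> U1 \<in> F \<or> U2 \<in> F" using U by (elim conjE) assumption
    have o1: "openin Y (tlU U1)" by (rule Y_basis2[OF U1o U1c])
    have o2: "openin Y (tlU U2)" by (rule Y_basis2[OF U2o U2c])
    have d: "tlU U1 \<inter> tlU U2 = {}" by (rule tl_disj[OF Ud])
    have cov: "S \<subseteq> tlU U1 \<union> tlU U2"
    proof
      fix s assume s: "s \<in> S"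
      then obtain F where F: "s = Inr F" "F \<in> Ends X LSS" using SE by auto
      then have "U1 \<in> F \<or> U2 \<in> F" using Uall Ends_iff by auto
      then show "s \<in> tlU U1 \<union> tlU U2" using F unfolding tlU_def by auto
    qed
    have p1: "p \<in> tlU U1" using E U1E Ends_iff unfolding tlU_def by auto
    have q2: "q \<in> tlU U2" using E' U2E Ends_iff unfolding tlU_def by auto
    have "tlU U1 \<inter> tlU U2 \<inter> S = {}" using d by auto
    moreover have "tlU U1 \<inter> S \<noteq> {}" using p1 p by auto
    moreover have "tlU U2 \<inter> S \<noteq> {}" using q2 q(1) by auto
    ultimately show False using cS o1 o2 cov unfolding connectedin by blast
  qed
qed

end


theorem theorem2p23:
  fixes X :: "'a set" and LSS :: "'a set set set" and T :: "'a topology"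
  assumes "top_large_scale_space X LSS T"
    and "Hausdorff_space T"
  shows "topspace (T_end X LSS T) = Inl ` X \<union> Inr ` Ends X LSS
    \<and> ls_compactification (T_end X LSS T) X LSS T Inl
    \<and> compactin (T_end X LSS T) (Inr ` Ends X LSS)
    \<and> totally_disconnected_space (subtopology (T_end X LSS T) (Inr ` Ends X LSS))"
proof -
  interpret tlss X LSS T by (rule tlss.intro) (rule assms(1))
  have L: "ls_compactification (T_end X LSS T) X LSS T Inl"
    unfolding ls_compactification_def
    by (intro conjI Y_ls_compact Hausdorff_Y[OF assms(2)] Y_embedding Y_open_X Y_dense)
  show ?thesis by (intro conjI Y_top L Y_compact_ends Y_tot_disc)
qed

end
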